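(* Let $\mathcal R$ be a PTRS. If there exists an infinite sequence $(\mu_n)_{n\in\mathbb N}$ with $\mu_n\overset{\mathsf i}{\rightrightarrows}_{\mathcal R}\mu_{n+1}$ for all $n$ and $\lim_{n\to\infty}|\mu_n|_{\mathcal R}<1$, then there also exists an infinite sequence $(\mu'_n)_{n\in\mathbb N}$ with $\mu'_n\overset{\mathsf i}{\rightrightarrows}_{\mathcal R}\mu'_{n+1}$ for all $n$, $\mu'_0=\{1:t\}$ for some term $t$, and $\lim_{n\to\infty}|\mu'_n|_{\mathcal R}<1$.
   Context: Finite multi-distributions on a set $A$: finite multisets of pairs $(p:a)$, $0<p\le1$, with probabilities summing to $1$; $p\cdot\mu=\{(pq:a)\mid(q:a)\in\mu\}$. A PTRS is a finite set of rules $\ell\to\{p_1:r_1,\dots,p_k:r_k\}$ ($\ell$ non-variable, $\mathcal V(r_j)\subseteq\mathcal V(\ell)$). $s\overset{\mathsf i}{\to}_{\mathcal R}\{p_1:t_1,\dots,p_k:t_k\}$ if for a position $\pi$, rule and substitution $\sigma$: $s|_\pi=\ell\sigma$, every proper subterm of $\ell\sigma$ is in $\mathtt{NF}_{\mathcal R}$ (terms admitting no rewrite step), and $t_j=s[r_j\sigma]_\pi$. $\overset{\mathsf i}{\rightrightarrows}_{\mathcal R}$ is its lifting: the smallest relation on finite multi-distributions of terms with $\{1:t\}\rightrightarrows\{1:t\}$ for $t\in\mathtt{NF}_{\mathcal R}$, $\{1:t\}\rightrightarrows\mu$ if $t\overset{\mathsf i}{\to}_{\mathcal R}\mu$, and $\bigcup_jp_j\cdot\mu_j\rightrightarrows\bigcup_jp_j\cdot\nu_j$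 whenever $\mu_j\rightrightarrows\nu_j$, $p_j>0$, $\sum_jp_j=1$. $|\mu|_{\mathcal R}=\sum_{(p:t)\in\mu,\,t\in\mathtt{NF}_{\mathcal R}}p$. *)

theory Defs
  imports Complex_Main "HOL-Library.Multiset"
begin

datatype ('f, 'v) trm = Var 'v | Fun 'f "('f, 'v) trm list"

fun vars :: "('f, 'v) trm \<Rightarrow> 'v set" where
  "vars (Var x) = {x}"
| "vars (Fun f ts) = \<Union> (set (map vars ts))"

fun subst :: "('f, 'v) trm \<Rightarrow> ('v \<Rightarrow> ('f, 'v) trm) \<Rightarrow> ('f, 'v) trm" where
  "subst (Var x) \<sigma> = \<sigma> x"
| "subst (Fun f ts) \<sigma> = Fun f (map (\<lambda>t. subst t \<sigma>) ts)"

text \<open>One-hole contexts: a context C together with the term C[s] plays the role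
  of a position pi in s with s|pi and s[.]pi.\<close>
datatype ('f, 'v) ctxt = Hole | More 'f "('f, 'v) trm list" "('f, 'v) ctxt" "('f, 'v) trm list"

fun ctxt_apply :: "('f, 'v) ctxt \<Rightarrow> ('f, 'v) trm \<Rightarrow> ('f, 'v) trm" where
  "ctxt_apply Hole s = s"
| "ctxt_apply (More f ss1 C ss2) s = Fun f (ss1 @ ctxt_apply C s # ss2)"

inductive supteq :: "('f, 'v) trm \<Rightarrow> ('f, 'v) trm \<Rightarrow> bool" where
  refl: "supteq t t"
| arg: "u \<in> set ts \<Longrightarrow> supteq u v \<Longrightarrow> supteq (Fun f ts) v"

definition supt :: "('f, 'v) trm \<Rightarrow> ('f, 'v) trm \<Rightarrow> bool" where
  "supt s t \<longleftrightarrow> (\<exists>f ts u. s = Fun f ts \<and> u \<in> set ts \<and> supteq u t)"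

type_synonym 'a mdist = "(real \<times> 'a) multiset"

definition is_mdist :: "'a mdist \<Rightarrow> bool" where
  "is_mdist \<mu> \<longleftrightarrow> (\<forall>(p, a) \<in># \<mu>. 0 < p \<and> p \<le> 1) \<and> sum_mset (image_mset fst \<mu>) = 1"

definition scale_mdist :: "real \<Rightarrow> 'a mdist \<Rightarrow> 'a mdist" where
  "scale_mdist p \<mu> = image_mset (\<lambda>(q, a). (p * q, a)) \<mu>"

type_synonym ('f, 'v) prule = "('f, 'v) trm \<times> ('f, 'v) trm mdist"

definition is_PTRS :: "('f, 'v) prule set \<Rightarrow> bool" where
  "is_PTRS R \<longleftrightarrow> finite R \<and>
     (\<forall>(l, \<nu>) \<in> R. (\<exists>f ts. l = Fun f ts) \<and> is_mdist \<nu> \<and>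
        (\<forall>(p, r) \<in># \<nu>. vars r \<subseteq> vars l))"

definition NF :: "('f, 'v) prule set \<Rightarrow> ('f, 'v) trm set" where
  "NF R = {t. \<not> (\<exists>C l \<nu> \<sigma>. (l, \<nu>) \<in> R \<and> t = ctxt_apply C (subst l \<sigma>))}"

definition istep :: "('f, 'v) prule set \<Rightarrow> ('f, 'v) trm \<Rightarrow> ('f, 'v) trm mdist \<Rightarrow> bool" where
  "istep R s \<mu> \<longleftrightarrow> (\<exists>C l \<nu> \<sigma>. (l, \<nu>) \<in> R \<and> s = ctxt_apply C (subst l \<sigma>) \<and>
     (\<forall>u. supt (subst l \<sigma>) u \<longrightarrow> u \<in> NF R) \<and>
     \<mu> = image_mset (\<lambda>(p, r). (p, ctxt_apply C (subst r \<sigma>))) \<nu>)"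

text \<open>Lifting of innermost rewriting to multi-distributions. The third rule takes a
  finite family (a list) of triples (p_j, mu_j, nu_j).\<close>
inductive ilift :: "('f, 'v) prule set \<Rightarrow> ('f, 'v) trm mdist \<Rightarrow> ('f, 'v) trm mdist \<Rightarrow> bool"
  for R where
  nf: "t \<in> NF R \<Longrightarrow> ilift R {#(1, t)#} {#(1, t)#}"
| step: "istep R t \<mu> \<Longrightarrow> ilift R {#(1, t)#} \<mu>"
| comb: "(\<forall>(p, \<mu>, \<nu>) \<in> set xs. p > 0 \<and> ilift R \<mu> \<nu>) \<Longrightarrow> sum_list (map fst xs) = 1 \<Longrightarrow>
    ilift R (sum_list (map (\<lambda>(p, \<mu>, \<nu>). scale_mdist p \<mu>) xs))
            (sum_list (map (\<lambda>(p, \<mu>, \<nu>). scale_mdist p \<nu>) xs))"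

definition nf_prob :: "('f, 'v) prule set \<Rightarrow> ('f, 'v) trm mdist \<Rightarrow> real" where
  "nf_prob R \<mu> = sum_mset (image_mset fst (filter_mset (\<lambda>(p, t). t \<in> NF R) \<mu>))"

end

theory Submission imports Defs begin

definition mass :: "'a mdist \<Rightarrow> real" where
  "mass \<mu> = sum_mset (image_mset fst \<mu>)"

definition sok :: "('f, 'v) prule set \<Rightarrow> real \<times> ('f, 'v) trm \<times> ('f, 'v) trm mdist \<Rightarrow> bool" where
  "sok R x = (case x of (p, t, \<nu>) \<Rightarrow> p > 0 \<and> ((t \<in> NF R \<and> \<nu> = {#(1, t)#}) \<or> istep R t \<nu>))"

definition lhsM :: "(real \<times> 'a \<times> 'b) multiset \<Rightarrow> (real \<times> 'a) multiset" where
  "lhsM M = image_mset (\<lambda>(p, t, _). (p, t)) M"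

definition rhsM :: "(real \<times> 'a \<times> 'c mdist) multiset \<Rightarrow> 'c mdist" where
  "rhsM M = sum_mset (image_mset (\<lambda>(p, t, \<nu>). scale_mdist p \<nu>) M)"

definition ilift' :: "('f, 'v) prule set \<Rightarrow> ('f, 'v) trm mdist \<Rightarrow> ('f, 'v) trm mdist \<Rightarrow> bool" where
  "ilift' R \<mu> \<nu> \<longleftrightarrow> (\<exists>M. (\<forall>x\<in>#M. sok R x) \<and> \<mu> = lhsM M \<and> \<nu> = rhsM M)"

definition scaleM :: "real \<Rightarrow> (real \<times> 'a \<times> 'b) multiset \<Rightarrow> (real \<times> 'a \<times> 'b) multiset" where
  "scaleM c M = image_mset (\<lambda>(q, t, \<nu>). (c * q, t, \<nu>)) M"

lemma scale_1[simp]: "scale_mdist 1 \<mu> = \<mu>"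
  by (simp add: scale_mdist_def case_prod_beta)

lemma scale_scale: "scale_mdist c (scale_mdist q \<mu>) = scale_mdist (c * q) \<mu>"
  by (simp add: scale_mdist_def image_mset.compositionality o_def case_prod_beta mult.assoc split_def)

lemma scale_plus: "scale_mdist c (a + b) = scale_mdist c a + scale_mdist c b"
  by (simp add: scale_mdist_def)

lemma scale_empty[simp]: "scale_mdist c {#} = {#}"
  by (simp add: scale_mdist_def)

lemma scale_sum_mset: "scale_mdist c (sum_mset X) = sum_mset (image_mset (scale_mdist c) X)"
  by (induction X) (auto simp: scale_plus)

lemma scale_single[simp]: "scale_mdist c {#(q, t)#} = {#(c * q, t)#}"
  by (simp add: scale_mdist_def)

lemma lhsM_scaleM: "lhsM (scaleM c M) = scale_mdist c (lhsM M)"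
  by (simp add: lhsM_def scaleM_def scale_mdist_def image_mset.compositionality o_def case_prod_beta)

lemma rhsM_scaleM: "rhsM (scaleM c M) = scale_mdist c (rhsM M)"
  by (induction M) (auto simp: rhsM_def scaleM_def scale_plus scale_scale)

lemma ilift'_scale:
  assumes "ilift' R \<mu> \<nu>" "c > 0"
  shows "ilift' R (scale_mdist c \<mu>) (scale_mdist c \<nu>)"
proof -
  obtain M where M: "\<forall>x\<in>#M. sok R x" "\<mu> = lhsM M" "\<nu> = rhsM M"
    using assms unfolding ilift'_def by blast
  have "\<forall>x\<in>#scaleM c M. sok R x"
    using M(1) assms(2) by (auto simp: scaleM_def sok_def)
  then show ?thesis unfolding ilift'_def
    using M by (metis lhsM_scaleM rhsM_scaleM)
qed

lemma lhsM_plus[simp]: "lhsM (A + B) = lhsM A + lhsM B" by (simp add: lhsM_def)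
lemma rhsM_plus[simp]: "rhsM (A + B) = rhsM A + rhsM B" by (simp add: rhsM_def)
lemma lhsM_empty[simp]: "lhsM {#} = {#}" by (simp add: lhsM_def)
lemma rhsM_empty[simp]: "rhsM {#} = {#}" by (simp add: rhsM_def)
lemma lhsM_add[simp]: "lhsM (add_mset (p,t,\<nu>) A) = add_mset (p,t) (lhsM A)" by (simp add: lhsM_def)
lemma rhsM_add[simp]: "rhsM (add_mset (p,t,\<nu>) A) = scale_mdist p \<nu> + rhsM A" by (simp add: rhsM_def)

lemma sok_sum_list:
  "(\<And>x. x \<in> set xs \<Longrightarrow> (\<forall>y\<in>#F x. sok R y) \<and> fst x > 0) \<Longrightarrow>
   \<forall>y\<in># sum_list (map (\<lambda>x. scaleM (fst x) (F x)) xs). sok R y"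
proof (induction xs)
  case (Cons a xs)
  have "\<forall>y\<in>#scaleM (fst a) (F a). sok R y"
    using Cons.prems[of a] by (auto simp: scaleM_def sok_def)
  then show ?case using Cons by auto
qed simp

lemma lhsM_sum_list: "lhsM (sum_list (map f xs)) = sum_list (map (\<lambda>x. lhsM (f x)) xs)"
  by (induction xs) auto
lemma rhsM_sum_list: "rhsM (sum_list (map f xs)) = sum_list (map (\<lambda>x. rhsM (f x)) xs)"
  by (induction xs) auto

lemma ilift_ilift':
  assumes "ilift R \<mu> \<nu>" shows "ilift' R \<mu> \<nu>"
  using assms
proof (induction rule: ilift.induct)
  case (nf t)
  then show ?case unfolding ilift'_def
    by (intro exI[of _ "{#(1, t, {#(1, t)#})#}"]) (auto simp: sok_def)
next
  case (step t \<mu>)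
  then show ?case unfolding ilift'_def
    by (intro exI[of _ "{#(1, t, \<mu>)#}"]) (auto simp: sok_def)
next
  case (comb xs)
  have "\<forall>x\<in>set xs. \<exists>M. (\<forall>y\<in>#M. sok R y) \<and> fst (snd x) = lhsM M \<and> snd (snd x) = rhsM M \<and> fst x > 0"
    using comb(1) unfolding ilift'_def by fastforce
  then obtain F where F: "\<And>x. x\<in>set xs \<Longrightarrow> (\<forall>y\<in>#F x. sok R y) \<and> fst (snd x) = lhsM (F x) \<and> snd (snd x) = rhsM (F x) \<and> fst x > 0"
    by metis
  define M where "M = sum_list (map (\<lambda>x. scaleM (fst x) (F x)) xs)"
  have "\<forall>y\<in>#M. sok R y"
    unfolding M_def using F by (intro sok_sum_list) auto
  moreover have "sum_list (map (\<lambda>(p, \<mu>, \<nu>). scale_mdist p \<mu>) xs) = lhsM M"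
    unfolding M_def lhsM_sum_list
    by (intro arg_cong[where f=sum_list] map_cong) (auto simp: lhsM_scaleM dest: F)
  moreover have "sum_list (map (\<lambda>(p, \<mu>, \<nu>). scale_mdist p \<nu>) xs) = rhsM M"
    unfolding M_def rhsM_sum_list
    by (intro arg_cong[where f=sum_list] map_cong) (auto simp: rhsM_scaleM dest: F)
  ultimately show ?case unfolding ilift'_def by blast
qed

lemma lhsM_mset: "lhsM (mset xs) = sum_list (map (\<lambda>(p, t, _). {#(p, t)#}) xs)"
proof (induction xs)
  case (Cons a xs) then show ?case by (cases a) simp
qed (simp add: lhsM_def)
lemma rhsM_mset: "rhsM (mset xs) = sum_list (map (\<lambda>(p, t, \<nu>). scale_mdist p \<nu>) xs)"
  by (induction xs) (auto simp: rhsM_def)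
lemma mass_lhsM_mset: "mass (lhsM (mset xs)) = sum_list (map fst xs)"
  by (induction xs) (auto simp: lhsM_def mass_def)

lemma aux1: "sum_list (map (\<lambda>(p, \<mu>, \<nu>). scale_mdist p \<mu>) (map (\<lambda>(p, t, \<nu>'). (p, {#(1::real, t)#}, \<nu>')) xs)) = lhsM (mset xs)"
proof (induction xs)
  case (Cons a xs) then show ?case by (cases a) simp
qed simp
lemma aux2: "sum_list (map (\<lambda>(p, \<mu>, \<nu>). scale_mdist p \<nu>) (map (\<lambda>(p, t, \<nu>'). (p, {#(1::real, t)#}, \<nu>')) xs)) = rhsM (mset xs)"
proof (induction xs)
  case (Cons a xs) then show ?case by (cases a) simp
qed simp

lemma ilift'_ilift:
  assumes "ilift' R \<mu> \<nu>" "mass \<mu> = 1"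
  shows "ilift R \<mu> \<nu>"
proof -
  obtain M where M: "\<forall>x\<in>#M. sok R x" "\<mu> = lhsM M" "\<nu> = rhsM M"
    using assms unfolding ilift'_def by blast
  obtain xs where xs: "mset xs = M" using ex_mset by blast
  define ys where "ys = map (\<lambda>(p, t, \<nu>'). (p, {#(1::real, t)#}, \<nu>')) xs"
  have "\<forall>(p, \<mu>, \<nu>) \<in> set ys. p > 0 \<and> ilift R \<mu> \<nu>"
    using M(1) unfolding ys_def xs[symmetric]
    by (auto simp: sok_def intro: ilift.intros)
  moreover have "sum_list (map fst ys) = 1"
    using assms(2) M(2) mass_lhsM_mset[of xs] unfolding ys_def xs
    by (simp add: case_prod_beta o_def)
  ultimately have "ilift R (sum_list (map (\<lambda>(p, \<mu>, \<nu>). scale_mdist p \<mu>) ys))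
            (sum_list (map (\<lambda>(p, \<mu>, \<nu>). scale_mdist p \<nu>) ys))"
    by (rule ilift.comb)
  moreover have "sum_list (map (\<lambda>(p, \<mu>, \<nu>). scale_mdist p \<mu>) ys) = \<mu>"
    unfolding M(2) xs[symmetric] ys_def by (rule aux1)
  moreover have "sum_list (map (\<lambda>(p, \<mu>, \<nu>). scale_mdist p \<nu>) ys) = \<nu>"
    unfolding M(3) xs[symmetric] ys_def by (rule aux2)
  ultimately show ?thesis by simp
qed

lemma mass_plus[simp]: "mass (a + b) = mass a + mass b" by (simp add: mass_def)
lemma mass_empty[simp]: "mass {#} = 0" by (simp add: mass_def)
lemma mass_add[simp]: "mass (add_mset x a) = fst x + mass a" by (simp add: mass_def)
lemma mass_scale[simp]: "mass (scale_mdist c a) = c * mass a"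
  by (induction a) (auto simp: mass_def scale_mdist_def algebra_simps)
lemma mass_sum_list: "mass (sum_list (map f xs)) = sum_list (map (\<lambda>x. mass (f x)) xs)"
  by (induction xs) auto

lemma istep_props:
  assumes "is_PTRS R" "istep R t \<nu>"
  shows "t \<notin> NF R" "\<forall>(q, s)\<in>#\<nu>. q > 0" "mass \<nu> = 1"
proof -
  obtain C l \<nu>0 \<sigma> where h: "(l, \<nu>0) \<in> R" "t = ctxt_apply C (subst l \<sigma>)"
    "\<nu> = image_mset (\<lambda>(p, r). (p, ctxt_apply C (subst r \<sigma>))) \<nu>0"
    using assms(2) unfolding istep_def by blast
  have md: "is_mdist \<nu>0" using assms(1) h(1) unfolding is_PTRS_def by blast
  show "t \<notin> NF R" using h unfolding NF_def by blast
  show "\<forall>(q, s)\<in>#\<nu>. q > 0" using md unfolding h(3) is_mdist_def by auto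
  have "image_mset fst \<nu> = image_mset fst \<nu>0"
    unfolding h(3) by (simp add: image_mset.compositionality o_def case_prod_beta)
  then show "mass \<nu> = 1" using md unfolding mass_def is_mdist_def by simp
qed

lemma ilift_mass:
  assumes "ilift R \<mu> \<nu>" shows "mass \<mu> = 1"
  using assms
proof (induction rule: ilift.induct)
  case (comb xs)
  have "mass (sum_list (map (\<lambda>(p, \<mu>, \<nu>). scale_mdist p \<mu>) xs)) = sum_list (map fst xs)"
    unfolding mass_sum_list
    by (intro arg_cong[where f=sum_list] map_cong) (use comb(1) in auto)
  then show ?case using comb(2) by simp
qed auto

lemma nf_prob_plus[simp]: "nf_prob R (a + b) = nf_prob R a + nf_prob R b"
  by (simp add: nf_prob_def)
lemma nf_prob_empty[simp]: "nf_prob R {#} = 0"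
  by (simp add: nf_prob_def)
lemma nf_prob_add[simp]: "nf_prob R (add_mset (p, t) a) = (if t \<in> NF R then p else 0) + nf_prob R a"
  by (simp add: nf_prob_def)
lemma nf_prob_scale[simp]: "nf_prob R (scale_mdist c a) = c * nf_prob R a"
proof (induction a)
  case (add x a) then show ?case by (cases x) (simp add: scale_mdist_def algebra_simps)
qed simp

lemma nf_prob_bounds:
  assumes "\<forall>(q, s)\<in>#\<mu>. q > 0"
  shows "0 \<le> nf_prob R \<mu>" "nf_prob R \<mu> \<le> mass \<mu>"
  using assms
proof (induction \<mu>)
  case (add x \<mu>)
  { case 1 with add show ?case by (cases x) auto }
  { case 2 with add show ?case by (cases x) auto }
qed simp_all

lemma pos_plus: "(\<forall>(q, s)\<in>#a + b. (q::real) > 0) \<longleftrightarrow> (\<forall>(q, s)\<in>#a. q > 0) \<and> (\<forall>(q, s)\<in>#b. q > 0)"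
  by auto

lemma ilift'_pos_lhs:
  assumes "ilift' R \<mu> \<nu>" shows "\<forall>(q, s)\<in>#\<mu>. q > 0"
  using assms unfolding ilift'_def lhsM_def sok_def by fastforce

lemma M_props:
  assumes "is_PTRS R" "\<forall>x\<in>#M. sok R x"
  shows "(\<forall>(q, s)\<in>#rhsM M. q > 0) \<and> mass (rhsM M) = mass (lhsM M) \<and>
         nf_prob R (lhsM M) \<le> nf_prob R (rhsM M)"
  using assms(2)
proof (induction M)
  case (add x M)
  obtain p t \<nu> where x: "x = (p, t, \<nu>)" by (cases x)
  have sx: "p > 0" "(t \<in> NF R \<and> \<nu> = {#(1, t)#}) \<or> istep R t \<nu>"
    using add.prems unfolding x sok_def by auto
  have IH: "(\<forall>(q, s)\<in>#rhsM M. q > 0) \<and> mass (rhsM M) = mass (lhsM M) \<and>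
         nf_prob R (lhsM M) \<le> nf_prob R (rhsM M)" using add by auto
  have "(\<forall>(q, s)\<in>#\<nu>. q > 0) \<and> mass \<nu> = 1 \<and> (if t \<in> NF R then 1 else 0) \<le> nf_prob R \<nu>"
    using sx(2)
  proof
    assume "istep R t \<nu>"
    with istep_props[OF assms(1) this] nf_prob_bounds(1)[of \<nu> R] show ?thesis by auto
  qed auto
  then have "(\<forall>(q, s)\<in>#scale_mdist p \<nu>. q > 0) \<and> mass (scale_mdist p \<nu>) = p \<and>
     (if t \<in> NF R then p else 0) \<le> nf_prob R (scale_mdist p \<nu>)"
  proof -
    assume h: "(\<forall>(q, s)\<in>#\<nu>. q > 0) \<and> mass \<nu> = 1 \<and> (if t \<in> NF R then 1 else 0) \<le> nf_prob R \<nu>"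
    have "\<forall>(q, s)\<in>#scale_mdist p \<nu>. q > 0" using h sx(1) by (auto simp: scale_mdist_def)
    moreover have "(if t \<in> NF R then p else 0) \<le> p * nf_prob R \<nu>"
      using h sx(1) mult_left_mono[of 1 "nf_prob R \<nu>" p] by (auto split: if_splits)
    ultimately show ?thesis using h by simp
  qed
  then show ?case using IH unfolding x by auto
qed simp

lemma ilift'_props:
  assumes "is_PTRS R" "ilift' R \<mu> \<nu>"
  shows "\<forall>(q, s)\<in>#\<nu>. q > 0" "mass \<nu> = mass \<mu>" "nf_prob R \<mu> \<le> nf_prob R \<nu>"
  using M_props[OF assms(1)] assms(2) unfolding ilift'_def by blast+

lemma ilift'_split:
  assumes "ilift' R (A + B) \<nu>"
  shows "\<exists>A' B'. \<nu> = A' + B' \<and> ilift' R A A' \<and> ilift' R B B'"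
proof -
  obtain M where M: "\<forall>x\<in>#M. sok R x" "A + B = lhsM M" "\<nu> = rhsM M"
    using assms unfolding ilift'_def by blast
  obtain M1 M2 where "M = M1 + M2" "A = lhsM M1" "B = lhsM M2"
    using image_mset_eq_plusD[OF M(2)[unfolded lhsM_def, symmetric]] unfolding lhsM_def by blast
  then show ?thesis using M unfolding ilift'_def by auto
qed

definition stepP :: "('f, 'v) prule set \<Rightarrow> (nat \<Rightarrow> ('f, 'v) trm mdist) \<Rightarrow> ('f, 'v) trm mdist \<Rightarrow>
    ('f, 'v) trm mdist \<Rightarrow> nat \<Rightarrow> ('f, 'v) trm mdist \<times> ('f, 'v) trm mdist \<Rightarrow> bool" where
  "stepP R c A B n ab \<longleftrightarrow> c (Suc n) = fst ab + snd ab \<and> ilift' R A (fst ab) \<and> ilift' R B (snd ab)"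

primrec splitc :: "('f, 'v) prule set \<Rightarrow> (nat \<Rightarrow> ('f, 'v) trm mdist) \<Rightarrow>
    ('f, 'v) trm mdist \<times> ('f, 'v) trm mdist \<Rightarrow> nat \<Rightarrow> ('f, 'v) trm mdist \<times> ('f, 'v) trm mdist" where
  "splitc R c ab 0 = ab"
| "splitc R c ab (Suc n) = (SOME ab'. stepP R c (fst (splitc R c ab n)) (snd (splitc R c ab n)) n ab')"

lemma split_chain:
  assumes "\<forall>n. ilift' R (c n) (c (Suc n))" "c 0 = A0 + B0"
  shows "\<exists>A B. A 0 = A0 \<and> B 0 = B0 \<and> (\<forall>n. c n = A n + B n \<and>
           ilift' R (A n) (A (Suc n)) \<and> ilift' R (B n) (B (Suc n)))"
proof -
  define s where "s = splitc R c (A0, B0)"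
  have S: "stepP R c (fst (s n)) (snd (s n)) n (s (Suc n))" if hn: "c n = fst (s n) + snd (s n)" for n
  proof -
    have "ilift' R (fst (s n) + snd (s n)) (c (Suc n))" using assms(1) hn by metis
    then obtain A' B' where "c (Suc n) = A' + B'" "ilift' R (fst (s n)) A'" "ilift' R (snd (s n)) B'"
      using ilift'_split by blast
    then have ex: "\<exists>ab. stepP R c (fst (s n)) (snd (s n)) n ab"
      unfolding stepP_def by (intro exI[of _ "(A', B')"]) simp
    have "s (Suc n) = (SOME ab. stepP R c (fst (s n)) (snd (s n)) n ab)"
      unfolding s_def by simp
    then show ?thesis using someI_ex[OF ex] by simp
  qed
  have C: "c n = fst (s n) + snd (s n)" for n
  proof (induction n)
    case 0 then show ?case using assms(2) unfolding s_def by simp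
  next
    case (Suc n) then show ?case using S[OF Suc] unfolding stepP_def by simp
  qed
  have "A0 = fst (s 0)" "B0 = snd (s 0)" unfolding s_def by simp_all
  moreover have "\<forall>n. c n = fst (s n) + snd (s n) \<and>
           ilift' R (fst (s n)) (fst (s (Suc n))) \<and> ilift' R (snd (s n)) (snd (s (Suc n)))"
    using C S unfolding stepP_def by blast
  ultimately show ?thesis
    by (intro exI[of _ "\<lambda>n. fst (s n)"] exI[of _ "\<lambda>n. snd (s n)"]) simp
qed

lemma chain_conv:
  assumes "is_PTRS R" "\<forall>n. ilift' R (c n) (c (Suc n))"
  obtains a where "(\<lambda>n. nf_prob R (c n)) \<longlonglongrightarrow> a" "a \<le> mass (c 0)"
proof -
  have m: "mass (c n) = mass (c 0)" for n
  proof (induction n)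
    case (Suc n) then show ?case using ilift'_props(2)[OF assms(1) assms(2)[rule_format, of n]] by simp
  qed simp
  have "incseq (\<lambda>n. nf_prob R (c n))"
    by (rule incseq_SucI) (use ilift'_props(3)[OF assms(1)] assms(2) in auto)
  moreover have "\<forall>n. nf_prob R (c n) \<le> mass (c 0)"
    using nf_prob_bounds(2) ilift'_pos_lhs assms(2) m by metis
  ultimately obtain a where a: "(\<lambda>n. nf_prob R (c n)) \<longlonglongrightarrow> a"
    by (rule incseq_convergent)
  moreover have "a \<le> mass (c 0)"
    by (rule LIMSEQ_le_const2[OF a]) (use \<open>\<forall>n. nf_prob R (c n) \<le> mass (c 0)\<close> in auto)
  ultimately show ?thesis using that by blast
qed

lemma G:
  assumes "is_PTRS R"
  shows "\<forall>c L. (\<forall>n. ilift' R (c n) (c (Suc n))) \<longrightarrow> c 0 = \<mu>0 \<longrightarrow>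
    (\<lambda>n. nf_prob R (c n)) \<longlonglongrightarrow> L \<longrightarrow> L < mass \<mu>0 \<longrightarrow>
    (\<exists>p t \<alpha> a. (p, t) \<in># \<mu>0 \<and> \<alpha> 0 = {#(p, t)#} \<and> (\<forall>n. ilift' R (\<alpha> n) (\<alpha> (Suc n))) \<and>
       (\<lambda>n. nf_prob R (\<alpha> n)) \<longlonglongrightarrow> a \<and> a < p)"
proof (induction \<mu>0)
  case empty
  show ?case
  proof (intro allI impI)
    fix c L
    assume h: "\<forall>n. ilift' R (c n) (c (Suc n))" "c 0 = {#}" "(\<lambda>n. nf_prob R (c n)) \<longlonglongrightarrow> L" "L < mass {#}"
    have "\<forall>n. 0 \<le> nf_prob R (c n)"
      using nf_prob_bounds(1) ilift'_pos_lhs h(1) by blast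
    then have "0 \<le> L"
      using LIMSEQ_le_const[OF h(3)] by blast
    with h(4) show "\<exists>p t \<alpha> a. (p, t) \<in># {#} \<and> \<alpha> 0 = {#(p, t)#} \<and> (\<forall>n. ilift' R (\<alpha> n) (\<alpha> (Suc n))) \<and>
       (\<lambda>n. nf_prob R (\<alpha> n)) \<longlonglongrightarrow> a \<and> a < p" by simp
  qed
next
  case (add x \<beta>)
  show ?case
  proof (intro allI impI)
    fix c L
    assume h: "\<forall>n. ilift' R (c n) (c (Suc n))" "c 0 = add_mset x \<beta>" "(\<lambda>n. nf_prob R (c n)) \<longlonglongrightarrow> L"
      "L < mass (add_mset x \<beta>)"
    have c0: "c 0 = {#x#} + \<beta>" using h(2) by simp
    obtain A B where AB: "A 0 = {#x#}" "B 0 = \<beta>" "\<forall>n. c n = A n + B n \<and>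
           ilift' R (A n) (A (Suc n)) \<and> ilift' R (B n) (B (Suc n))"
      using split_chain[OF h(1) c0] by blast
    have chA: "\<forall>n. ilift' R (A n) (A (Suc n))" and chB: "\<forall>n. ilift' R (B n) (B (Suc n))"
      and cAB: "\<And>n. c n = A n + B n" using AB(3) by blast+
    obtain a where a: "(\<lambda>n. nf_prob R (A n)) \<longlonglongrightarrow> a" "a \<le> mass (A 0)"
      using chain_conv[OF assms chA] by blast
    obtain b where b: "(\<lambda>n. nf_prob R (B n)) \<longlonglongrightarrow> b" "b \<le> mass (B 0)"
      using chain_conv[OF assms chB] by blast
    have "(\<lambda>n. nf_prob R (c n)) \<longlonglongrightarrow> a + b"
      unfolding cAB nf_prob_plus by (rule tendsto_add[OF a(1) b(1)])
    then have L: "L = a + b" using h(3) LIMSEQ_unique by blast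
    obtain p t where x: "x = (p, t)" by (cases x)
    show "\<exists>p t \<alpha> a. (p, t) \<in># add_mset x \<beta> \<and> \<alpha> 0 = {#(p, t)#} \<and> (\<forall>n. ilift' R (\<alpha> n) (\<alpha> (Suc n))) \<and>
       (\<lambda>n. nf_prob R (\<alpha> n)) \<longlonglongrightarrow> a \<and> a < p"
    proof (cases "a < p")
      case True
      have "(p, t) \<in># add_mset x \<beta>" unfolding x by simp
      then show ?thesis
        by (intro exI[of _ p] exI[of _ t] exI[of _ A] exI[of _ a]) (use True a(1) AB(1) chA x in simp)
    next
      case False
      then have lt: "b < mass \<beta>" using h(4) L a(2) AB(1) unfolding x by simp
      obtain p' t' \<alpha> a' where r: "(p', t') \<in># \<beta>" "\<alpha> 0 = {#(p', t')#}" "\<forall>n. ilift' R (\<alpha> n) (\<alpha> (Suc n))"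
        "(\<lambda>n. nf_prob R (\<alpha> n)) \<longlonglongrightarrow> a'" "a' < p'"
        using add.IH[rule_format, OF chB[rule_format] AB(2) b(1) lt] by blast
      have "(p', t') \<in># add_mset x \<beta>" using r(1) by simp
      then show ?thesis
        by (intro exI[of _ p'] exI[of _ t'] exI[of _ \<alpha>] exI[of _ a']) (use r in simp)
    qed
  qed
qed

theorem mainTheorem11:
  fixes R :: "('f, 'v) prule set" and \<mu> :: "nat \<Rightarrow> ('f, 'v) trm mdist"
  assumes "is_PTRS R"
    and "\<forall>n. ilift R (\<mu> n) (\<mu> (Suc n))"
    and "\<exists>L. (\<lambda>n. nf_prob R (\<mu> n)) \<longlonglongrightarrow> L \<and> L < 1"
  shows "\<exists>\<mu>' :: nat \<Rightarrow> ('f, 'v) trm mdist.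
           (\<forall>n. ilift R (\<mu>' n) (\<mu>' (Suc n))) \<and>
           (\<exists>t. \<mu>' 0 = {#(1, t)#}) \<and>
           (\<exists>L. (\<lambda>n. nf_prob R (\<mu>' n)) \<longlonglongrightarrow> L \<and> L < 1)"
proof -
  obtain L where L: "(\<lambda>n. nf_prob R (\<mu> n)) \<longlonglongrightarrow> L" "L < 1" using assms(3) by blast
  have ch: "\<forall>n. ilift' R (\<mu> n) (\<mu> (Suc n))" using assms(2) ilift_ilift' by blast
  have m0: "mass (\<mu> 0) = 1" using assms(2) ilift_mass by blast
  obtain p t \<alpha> a where r: "(p, t) \<in># \<mu> 0" "\<alpha> 0 = {#(p, t)#}" "\<forall>n. ilift' R (\<alpha> n) (\<alpha> (Suc n))"
        "(\<lambda>n. nf_prob R (\<alpha> n)) \<longlonglongrightarrow> a" "a < p"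
    using G[OF assms(1), rule_format, OF ch[rule_format] HOL.refl L(1)] L(2) m0 by auto
  have p: "p > 0" using ilift'_pos_lhs[OF ch[rule_format, of 0]] r(1) by auto
  have mA: "mass (\<alpha> n) = p" for n
  proof (induction n)
    case 0 then show ?case using r(2) by simp
  next
    case (Suc n) then show ?case using ilift'_props(2)[OF assms(1) r(3)[rule_format, of n]] by simp
  qed
  define \<mu>' where "\<mu>' n = scale_mdist (1 / p) (\<alpha> n)" for n
  have "\<forall>n. ilift R (\<mu>' n) (\<mu>' (Suc n))"
  proof
    fix n
    have "ilift' R (\<mu>' n) (\<mu>' (Suc n))"
      unfolding \<mu>'_def using p by (intro ilift'_scale r(3)[rule_format]) simp
    moreover have "mass (\<mu>' n) = 1" unfolding \<mu>'_def using mA p by simp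
    ultimately show "ilift R (\<mu>' n) (\<mu>' (Suc n))" by (rule ilift'_ilift)
  qed
  moreover have "\<mu>' 0 = {#(1, t)#}" unfolding \<mu>'_def r(2) using p by simp
  moreover have "(\<lambda>n. nf_prob R (\<mu>' n)) \<longlonglongrightarrow> (1 / p) * a"
    unfolding \<mu>'_def nf_prob_scale by (rule tendsto_mult_left[OF r(4)])
  moreover have "(1 / p) * a < 1" using r(5) p by (simp add: field_simps)
  ultimately show ?thesis by blast
qed

end
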